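(* Let $f:[0,\infty)\to\mathbb{R}$ be differentiable, let $0<a<b<\infty$, and suppose $f'$ is Lebesgue integrable on $[a,b]$. Let $m\in(0,1]$ and $q>1$, and suppose $|f'|^q$ is $(1,m)$-GA-convex on $[0,\max\{a^{1/m},b\}]$. Then \[ \biggl|\frac{b^2f(b)-a^2f(a)}{2}-\int_a^b xf(x)\,dx\biggr|\le\frac{(\ln b-\ln a)^{1-1/q}}{2}\Bigl(\frac{1}{3q}\Bigr)^{1/q}\Bigl\{m\bigl[L(a^{3q},b^{3q})-a^{3q}\bigr]\bigl|f'(a^{1/m})\bigr|^q+\bigl[b^{3q}-L(a^{3q},b^{3q})\bigr]|f'(b)|^q\Bigr\}^{1/q}. \]
   Context: For $c>0$, $h:[0,c]\to\mathbb{R}$ and $(\alpha,m)\in(0,1]^2$, $h$ is called $(\alpha,m)$-GA-convex on $[0,c]$ if $h\bigl(x^\lambda y^{m(1-\lambda)}\bigr)\le\lambda^\alpha h(x)+m(1-\lambda^\alpha)h(y)$ for all $x,y\in[0,c]$ and all $\lambda\in[0,1]$ (with the convention $0^0=1$). For $x,y>0$, $x\neq y$, the logarithmic mean is $L(x,y)=\frac{y-x}{\ln y-\ln x}$. *)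

theory Defs
  imports "HOL-Analysis.Analysis"
begin

text \<open>Real power with the convention 0^0 = 1 (for nonnegative bases).\<close>
definition gapow :: "real \<Rightarrow> real \<Rightarrow> real" where
  "gapow x t = (if t = 0 then 1 else x powr t)"

definition GA_convex :: "real \<Rightarrow> real \<Rightarrow> real \<Rightarrow> (real \<Rightarrow> real) \<Rightarrow> bool" where
  "GA_convex \<alpha> m c h \<longleftrightarrow>
     (\<forall>x\<in>{0..c}. \<forall>y\<in>{0..c}. \<forall>t\<in>{0..1}.
        h (gapow x t * gapow y (m * (1 - t)))
          \<le> gapow t \<alpha> * h x + m * (1 - gapow t \<alpha>) * h y)"

definition logmean :: "real \<Rightarrow> real \<Rightarrow> real" where
  "logmean x y = (y - x) / (ln y - ln x)"

end

theory Submission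
  imports Defs
begin

lemma ln_strict: fixes x :: real assumes "0 < x" "x \<noteq> 1" shows "ln x < x - 1"
proof -
  have s: "sqrt x > 0" using assms by simp
  have "ln x = 2 * ln (sqrt x)" using assms by (simp add: ln_sqrt)
  also have "\<dots> \<le> 2 * (sqrt x - 1)" using ln_le_minus_one[OF s] by simp
  also have "\<dots> < x - 1"
  proof -
    have "sqrt x \<noteq> 1" using assms by auto
    hence "(sqrt x - 1)^2 > 0" by simp
    moreover have "sqrt x * sqrt x = x" using assms by simp
    ultimately show ?thesis by (simp add: power2_eq_square algebra_simps)
  qed
  finally show ?thesis .
qed

lemma logmean_bounds: fixes A B :: real assumes "0 < A" "A < B"
  shows "A < logmean A B" "logmean A B < B"
proof -
  have d: "ln B - ln A > 0" using assms by simp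
  have 1: "ln (B/A) < B/A - 1" using assms by (intro ln_strict) auto
  have 2: "ln (A/B) < A/B - 1" using assms by (intro ln_strict) auto
  have e1: "ln (B/A) = ln B - ln A" using assms by (simp add: ln_div)
  have e2: "ln (A/B) = -(ln B - ln A)" using assms by (simp add: ln_div)
  have "A * ln (B/A) < A * (B/A - 1)" using 1 assms by simp
  hence "A * (ln B - ln A) < B - A" using assms e1 by (simp add: algebra_simps)
  thus "A < logmean A B" using d by (simp add: logmean_def pos_less_divide_eq)
  have "B * ln (A/B) < B * (A/B - 1)" using 2 assms by simp
  hence "B - A < B * (ln B - ln A)" using assms e2 by (simp add: algebra_simps)
  thus "logmean A B < B" using d by (simp add: logmean_def pos_divide_less_eq)
qed

theorem corollary3p5:
  fixes f f' :: "real \<Rightarrow> real" and a b m q :: real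
  assumes deriv: "\<And>x. x \<ge> 0 \<Longrightarrow> (f has_real_derivative f' x) (at x within {0..})"
    and ab: "0 < a" "a < b"
    and integ: "set_integrable lborel {a..b} f'"
    and m: "0 < m" "m \<le> 1"
    and q: "q > 1"
    and conv: "GA_convex 1 m (max (a powr (1/m)) b) (\<lambda>x. \<bar>f' x\<bar> powr q)"
  shows "\<bar>(b\<^sup>2 * f b - a\<^sup>2 * f a) / 2 - integral {a..b} (\<lambda>x. x * f x)\<bar>
    \<le> (ln b - ln a) powr (1 - 1/q) / 2 * (1 / (3*q)) powr (1/q) *
       (m * (logmean (a powr (3*q)) (b powr (3*q)) - a powr (3*q)) * \<bar>f' (a powr (1/m))\<bar> powr q
        + (b powr (3*q) - logmean (a powr (3*q)) (b powr (3*q))) * \<bar>f' b\<bar> powr q) powr (1/q)"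
proof -
  define D where "D = ln b - ln a"
  define c where "c = 3*q"
  define A where "A = a powr c"
  define B where "B = b powr c"
  define L where "L = logmean A B"
  define h1 where "h1 = \<bar>f' (a powr (1/m))\<bar> powr q"
  define h2 where "h2 = \<bar>f' b\<bar> powr q"
  define K where "K = m * (L - A) * h1 + (B - L) * h2"
  define I where "I = K / c"
  define r where "r = 1 - 1/q"
  define g where "g = (\<lambda>x. h2 + (m*h1 - h2) * ((ln b - ln x) / D))"
  have Dpos: "D > 0" using ab by (simp add: D_def)
  have cpos: "c > 0" using q by (simp add: c_def)
  have Apos: "A > 0" using ab by (simp add: A_def)
  have AB: "A < B" using ab cpos by (simp add: A_def B_def powr_less_mono2)
  have LA: "A < L" "L < B" using logmean_bounds[OF Apos AB] by (simp_all add: L_def)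
  have lnBA: "ln B - ln A = c * D" using ab by (simp add: A_def B_def D_def ln_powr algebra_simps)
  have Ldef: "L = (B - A) / (c*D)" using lnBA by (simp add: L_def logmean_def)
  have h1nn: "h1 \<ge> 0" and h2nn: "h2 \<ge> 0" by (simp_all add: h1_def h2_def)
  have Knn: "K \<ge> 0" using LA h1nn h2nn m by (simp add: K_def)
  have rq: "r + 1/q = 1" "r \<ge> 0" using q by (simp_all add: r_def)
  have gbound: "\<bar>f' x\<bar> powr q \<le> g x" if x: "x \<in> {a..b}" for x
  proof -
    define s where "s = (ln b - ln x) / D"
    have x0: "x > 0" using x ab by auto
    have "ln x \<le> ln b" "ln a \<le> ln x" using x x0 ab by auto
    hence s01: "0 \<le> s" "s \<le> 1" using Dpos by (auto simp: s_def D_def divide_simps)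
    have s': "1 - s \<in> {0..1}" using s01 by auto
    have cmax: "b \<in> {0..max (a powr (1/m)) b}" "a powr (1/m) \<in> {0..max (a powr (1/m)) b}" using ab by auto
    note H = conv[unfolded GA_convex_def, rule_format, OF cmax(1) cmax(2) s']
    have e1: "gapow b (1-s) = b powr (1-s)" using ab by (simp add: gapow_def)
    have e2: "gapow (a powr (1/m)) (m * (1 - (1-s))) = a powr s"
      using ab m by (auto simp: gapow_def powr_powr)
    have e3: "gapow (1-s) 1 = 1 - s" using s01 by (simp add: gapow_def)
    have "b powr (1-s) * a powr s = exp ((1-s) * ln b + s * ln a)"
      using ab by (simp add: powr_def exp_add)
    also have "(1-s) * ln b + s * ln a = ln x"
    proof -
      have sD: "s*D = ln b - ln x" using Dpos by (simp add: s_def)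
      have "(1-s)*ln b + s*ln a = ln b - s*D" by (simp add: D_def algebra_simps)
      thus ?thesis using sD by simp
    qed
    finally have e4: "b powr (1-s) * a powr s = x" using x0 by simp
    from H[unfolded e1 e2 e3 e4] have H': "\<bar>f' x\<bar> powr q \<le> (1-s)*h2 + m*(1-(1-s))*h1"
      by (simp add: h1_def h2_def)
    have gx: "g x = h2 + (m * h1 - h2) * s" unfolding g_def s_def by simp
    have "(1-s)*h2 + m*(1-(1-s))*h1 = h2 + (m * h1 - h2) * s" by (simp add: algebra_simps)
    thus ?thesis using H' gx by simp
  qed
  define G where "G = (\<lambda>x. h2 * x powr c / c + (m * h1 - h2) / D * (x powr c * (ln b - ln x) / c + x powr c / c^2))"
  have Gder: "(G has_real_derivative (x powr (c-1) * g x)) (at x)" if "x > 0" for x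
  proof -
    have "(G has_real_derivative (h2 * (c * x powr (c-1)) / c + (m * h1 - h2) / D *
        ((c * x powr (c-1)) * (ln b - ln x) / c + x powr c * (- (1/x)) / c + (c * x powr (c-1)) / c^2))) (at x)" (is "(G has_real_derivative ?E) _")
      unfolding G_def using that Dpos cpos
      by (auto intro!: derivative_eq_intros simp: field_simps power2_eq_square)
    moreover have "?E = x powr (c-1) * g x"
    proof -
      have xc: "x powr c * (- (1/x)) = - (x powr (c-1))" using that by (simp add: powr_diff)
      show ?thesis unfolding xc using cpos Dpos
        by (simp add: g_def field_simps power2_eq_square)
    qed
    ultimately show ?thesis by simp
  qed
  have Gint: "((\<lambda>x. x powr (c-1) * g x) has_integral I) {a..b}"
  proof -
    have "((\<lambda>x. x powr (c-1) * g x) has_integral (G b - G a)) {a..b}"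
      apply (rule fundamental_theorem_of_calculus)
      using ab apply simp
      apply (rule has_field_derivative_at_within[THEN has_real_derivative_iff_has_vector_derivative[THEN iffD1]])
      using ab by (intro Gder) auto
    moreover have "G b - G a = I"
    proof -
      have la: "ln a = ln b - D" by (simp add: D_def)
      show ?thesis
      using cpos Dpos unfolding G_def I_def K_def Ldef A_def[symmetric] B_def[symmetric] la
      by (simp add: field_simps power2_eq_square)
    qed
    ultimately show ?thesis by simp
  qed
  have lnint: "((\<lambda>x. 1/x) has_integral D) {a..b}"
  proof -
    have "((\<lambda>x. 1/x) has_integral (ln b - ln a)) {a..b}"
      apply (rule fundamental_theorem_of_calculus)
      using ab apply simp
      apply (rule has_field_derivative_at_within[THEN has_real_derivative_iff_has_vector_derivative[THEN iffD1]])
      using ab by (intro DERIV_ln_divide) auto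
    thus ?thesis by (simp add: D_def)
  qed
  define J0 where "J0 = integral {a..b} (\<lambda>x. x * f x)"
  have fder: "(f has_real_derivative f' x) (at x within {a..b})" if "x \<in> {a..b}" for x
    using deriv[of x] that ab by (auto intro: has_field_derivative_subset)
  have fcont: "continuous_on {a..b} f" by (rule DERIV_continuous_on[OF fder])
  have xfint: "((\<lambda>x. x * f x) has_integral J0) {a..b}"
    unfolding J0_def by (intro integrable_integral integrable_continuous_interval continuous_intros fcont)
  have P: "((\<lambda>x. 2 * x * f x + x^2 * f' x) has_integral (b^2 * f b - a^2 * f a)) {a..b}"
    apply (rule fundamental_theorem_of_calculus[where f="\<lambda>x. x^2 * f x"])
    using ab apply simp
    apply (rule has_real_derivative_iff_has_vector_derivative[THEN iffD1])
    by (auto intro!: derivative_eq_intros fder)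
  define J where "J = b^2 * f b - a^2 * f a - 2 * J0"
  have Jint: "((\<lambda>x. x^2 * f' x) has_integral J) {a..b}"
  proof -
    have "((\<lambda>x. (2 * x * f x + x^2 * f' x) - 2 * (x * f x)) has_integral J) {a..b}"
      unfolding J_def by (intro has_integral_diff P has_integral_mult_right xfint)
    thus ?thesis by simp
  qed
  have Jbound: "\<bar>J\<bar> \<le> D powr r * I powr (1/q)"
  proof (cases "K = 0")
    case True
    have "h1 = 0" "h2 = 0" using True LA h1nn h2nn m unfolding K_def
      by (smt (verit) mult_nonneg_nonneg mult_pos_pos)+
    hence "f' x = 0" if "x \<in> {a..b}" for x using gbound[OF that] by (simp add: g_def)
    hence "((\<lambda>x. x^2 * f' x) has_integral 0) {a..b}"
      by (intro has_integral_is_0) auto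
    hence "J = 0" using Jint by (metis has_integral_unique)
    thus ?thesis by simp
  next
    case False
    hence Ipos: "I > 0" using Knn cpos by (simp add: I_def)
    define C where "C = D powr r * I powr (1/q)"
    have Cnn: "C \<ge> 0" by (simp add: C_def)
    define k where "k = (\<lambda>x. C * (r / D * (1/x) + 1 / (q*I) * (x powr (c-1) * g x)))"
    have kint: "(k has_integral C) {a..b}"
    proof -
      have "(k has_integral C * (r / D * D + 1 / (q*I) * I)) {a..b}"
        unfolding k_def by (intro has_integral_mult_right has_integral_add lnint Gint)
      thus ?thesis using rq Dpos Ipos q by simp
    qed
    have pw: "norm (x^2 * f' x) \<le> k x" if x: "x \<in> {a..b}" for x
    proof -
      have x0: "x > 0" using x ab by auto
      have gnn: "g x \<ge> 0" using gbound[OF x] by (smt (verit) powr_ge_zero)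
      define X where "X = 1 / (x*D)"
      define Y where "Y = x powr (c-1) * g x / I"
      have Xpos: "X > 0" using x0 Dpos by (simp add: X_def)
      have Ynn: "Y \<ge> 0" using gnn Ipos by (simp add: Y_def)
      have young: "X powr r * Y powr (1/q) \<le> r * X + (1/q) * Y"
      proof (cases "Y = 0")
        case True thus ?thesis using Xpos rq by simp
      next
        case False thus ?thesis using Youngs_inequality_0[of r "1/q" X Y] Xpos Ynn rq q by simp
      qed
      have f'le: "\<bar>f' x\<bar> \<le> g x powr (1/q)"
      proof -
        have "\<bar>f' x\<bar> = (\<bar>f' x\<bar> powr q) powr (1/q)" using q by (simp add: powr_powr)
        also have "\<dots> \<le> g x powr (1/q)" using gbound[OF x] q by (intro powr_mono2) auto
        finally show ?thesis .
      qed
      have eq: "C * (X powr r * Y powr (1/q)) = x^2 * g x powr (1/q)"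
      proof -
        have "C * (X powr r * Y powr (1/q)) = (D * X) powr r * (I * Y) powr (1/q)"
          unfolding C_def using Dpos Xpos Ipos Ynn by (simp add: powr_mult)
        also have "D * X = 1/x" using Dpos by (simp add: X_def)
        also have "I * Y = x powr (c-1) * g x" using Ipos by (simp add: Y_def)
        also have "(1/x) powr r = x powr (-r)" using x0 by (simp add: powr_minus_divide powr_divide)
        also have "(x powr (c-1) * g x) powr (1/q) = x powr ((c-1)/q) * g x powr (1/q)"
          using x0 gnn by (simp add: powr_mult powr_powr)
        also have "x powr (-r) * (x powr ((c-1)/q) * g x powr (1/q)) = x powr (-r + (c-1)/q) * g x powr (1/q)"
          using powr_add[of x "-r" "(c-1)/q"] by simp
        also have "-r + (c-1)/q = 2" using q by (simp add: r_def c_def field_simps)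
        finally show ?thesis using x0 by simp
      qed
      have "norm (x^2 * f' x) = x^2 * \<bar>f' x\<bar>" by (simp add: abs_mult)
      also have "\<dots> \<le> x^2 * g x powr (1/q)" using f'le by (simp add: mult_left_mono)
      also have "\<dots> = C * (X powr r * Y powr (1/q))" using eq by simp
      also have "\<dots> \<le> C * (r * X + (1/q) * Y)" using young Cnn by (simp add: mult_left_mono)
      also have "\<dots> = k x" using Ipos q by (simp add: k_def X_def Y_def field_simps)
      finally show ?thesis .
    qed
    have "norm (integral {a..b} (\<lambda>x. x^2 * f' x)) \<le> integral {a..b} k"
      using Jint kint pw by (intro integral_norm_bound_integral) auto
    thus ?thesis using Jint kint by (simp add: integral_unique C_def)
  qed
  have "\<bar>(b\<^sup>2 * f b - a\<^sup>2 * f a) / 2 - integral {a..b} (\<lambda>x. x * f x)\<bar> = \<bar>J\<bar> / 2"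
  proof -
    have abs2: "\<bar>u / 2 - v\<bar> = \<bar>u - 2 * v\<bar> / 2" for u v :: real by (cases "u / 2 - v \<ge> 0") auto
    thus ?thesis using abs2 by (simp add: J_def J0_def)
  qed
  also have "\<dots> \<le> D powr r * I powr (1/q) / 2" using Jbound by simp
  also have "I powr (1/q) = (1/c) powr (1/q) * K powr (1/q)"
    using cpos Knn by (simp add: I_def powr_mult[symmetric])
  finally show ?thesis
    by (simp add: D_def r_def c_def K_def L_def A_def B_def h1_def h2_def)
qed

end
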